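(* Let $F$ be a distribution on $\mathbb{R}$ with a density, and let $X, X_1, X_2,\ldots$ be i.i.d. with distribution $F$ and mean $\mu$. Suppose $\bar F(x)=1-F(x)=L(x)x^{-\alpha}$ for a slowly varying $L$ and $\alpha>2$, and $E|X|^{2+\delta}<\infty$ for some $\delta>0$. Let $\gamma=\gamma(n)=n\mu+\omega(\sqrt{n\log n})$ and let $u=u(n)\le \mu+O\big((\gamma-n\mu)/\sqrt{\log n}\big)$. Then, as $n\to\infty$, $$\tilde p(\tilde F_u)-\tilde p(F) = -\tilde p(F)(1+o(1)).$$
   Context: $S_n=X_1+\cdots+X_n$. For a distribution $G$, $\tilde p(G)=P_G(S_n\ge\gamma)$ is the probability that $S_n\ge\gamma$ when $X_1,\ldots,X_n$ are i.i.d. with law $G$. The truncated distribution $\tilde F_u$ is $\tilde F_u(x)=F(x)/F(u)$ for $x\le u$ and $1$ for $x>u$. $a_n=o(b_n)$: $a_n/b_n\to0$; $a_n=\omega(b_n)$: $a_n/b_n\to\infty$; $a_n=O(b_n)$: $|a_n/b_n|$ bounded for large $n$. *)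

theory Defs
  imports "HOL-Probability.Probability"
begin

definition cdf_of :: "real measure \<Rightarrow> real \<Rightarrow> real" where
  "cdf_of G x = measure G {..x}"

definition ptilde :: "real measure \<Rightarrow> nat \<Rightarrow> real \<Rightarrow> real" where
  "ptilde G n \<gamma> =
     measure (PiM {..<n} (\<lambda>_. G))
       {x \<in> space (PiM {..<n} (\<lambda>_. G)). \<gamma> \<le> (\<Sum>i<n. x i)}"

text \<open>Truncated law: cdf F(x)/F(u) for x <= u and 1 for x > u,
  i.e. the law of X conditioned on X <= u.\<close>
definition truncated :: "real measure \<Rightarrow> real \<Rightarrow> real measure" where
  "truncated G u = density G (\<lambda>x. ennreal (indicator {..u} x / cdf_of G u))"

definition slowly_varying :: "(real \<Rightarrow> real) \<Rightarrow> bool" where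
  "slowly_varying L \<longleftrightarrow>
     (\<forall>\<^sub>F x in at_top. L x > 0) \<and>
     (\<forall>t>0. ((\<lambda>x. L (t * x) / L x) \<longlongrightarrow> 1) at_top)"

end

theory Submission
  imports Defs
begin

lemma exp_quad_bound:
  fixes w :: real
  shows "exp w \<le> 1 + w + w\<^sup>2 / 2 * exp (max w 0)"
proof (cases "w \<le> 0")
  case True
  obtain t where "exp w = (\<Sum>m<3. (w ^ m) / fact m) + (exp t / fact 3) * w ^ 3"
    using Maclaurin_exp_le[of w 3] by blast
  moreover have "w ^ 3 \<le> 0" using True by (simp add: power_le_zero_eq)
  moreover have "exp t / fact 3 * w ^ 3 \<le> 0"
    using calculation(2) by (simp add: mult_nonneg_nonpos divide_nonpos_pos)
  ultimately have "exp w \<le> 1 + w + w\<^sup>2 / 2"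
    by (simp add: numeral_3_eq_3 power2_eq_square)
  then show ?thesis using True by (simp add: power2_eq_square)
next
  case False
  obtain t where t: "\<bar>t\<bar> \<le> \<bar>w\<bar>" "exp w = (\<Sum>m<2. (w ^ m) / fact m) + (exp t / fact 2) * w ^ 2"
    using Maclaurin_exp_le[of w 2] by blast
  have "exp t \<le> exp w" using t(1) False by simp
  then have "exp t / 2 * w^2 \<le> w^2/2 * exp w" by (metis mult.commute mult_right_mono zero_le_power2 divide_right_mono times_divide_eq_left zero_le_numeral)
  then show ?thesis using t(2) False by (simp add: numeral_2_eq_2)
qed
lemma mgf_pt:
  fixes s z D \<delta> :: real
  assumes s: "s > 0" and zD: "z \<le> D" and d: "\<delta> > 0"
  shows "z\<^sup>2 * exp (s * max z 0) \<le> exp 1 * z\<^sup>2 + \<bar>z\<bar> powr (2 + \<delta>) * s powr \<delta> * exp (s * D)"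
proof (cases "s * z \<le> 1")
  case True
  have "s * max z 0 \<le> 1" using True s by (auto simp: max_def)
  then have "z\<^sup>2 * exp (s * max z 0) \<le> exp 1 * z\<^sup>2" by (subst mult.commute, intro mult_left_mono) auto
  moreover have "0 \<le> \<bar>z\<bar> powr (2 + \<delta>) * s powr \<delta> * exp (s * D)" by simp
  ultimately show ?thesis by linarith
next
  case False
  then have zp: "z > 0" using s by (smt (verit) mult_nonpos_nonneg mult_nonneg_nonpos)
  have iz: "1 / z \<le> s" using False zp by (simp add: field_simps)
  have "z\<^sup>2 = z powr (2 + \<delta>) * (1 / z) powr \<delta>"
    using zp by (simp add: powr_add powr_divide field_simps powr_numeral[symmetric] del: powr_numeral)
  also have "\<dots> \<le> z powr (2 + \<delta>) * s powr \<delta>"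
    using iz zp d by (intro mult_left_mono powr_mono2) auto
  finally have a: "z\<^sup>2 \<le> z powr (2 + \<delta>) * s powr \<delta>" .
  have "z\<^sup>2 * exp (s * max z 0) = z\<^sup>2 * exp (s * z)" using zp by simp
  also have "\<dots> \<le> z\<^sup>2 * exp (s * D)" using zD s by (intro mult_left_mono) auto
  also have "\<dots> \<le> z powr (2 + \<delta>) * s powr \<delta> * exp (s * D)" using a by (intro mult_right_mono) auto
  finally show ?thesis using zp by (simp add: add_increasing)
qed
lemma second_moment_prod:
  fixes M :: "real measure" and I :: "nat set"
  assumes P: "prob_space M" and fin: "finite I" and kI: "k \<in> I"
    and hm: "h \<in> borel_measurable M" and hb: "\<And>v. \<bar>h v\<bar> \<le> 1"
    and Wm: "W \<in> borel_measurable M" and W2: "integrable M (\<lambda>v. (W v)\<^sup>2)"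
    and W0: "integral\<^sup>L M W = 0"
  shows "integrable (PiM I (\<lambda>_. M)) (\<lambda>x. h (x k) * (\<Sum>i\<in>I-{k}. W (x i))\<^sup>2)
     \<and> integral\<^sup>L (PiM I (\<lambda>_. M)) (\<lambda>x. h (x k) * (\<Sum>i\<in>I-{k}. W (x i))\<^sup>2)
       = integral\<^sup>L M h * real (card (I-{k})) * integral\<^sup>L M (\<lambda>v. (W v)\<^sup>2)"
proof -
  interpret prob_space M by (rule P)
  interpret PS: product_sigma_finite "\<lambda>_::nat. M"
    by (simp add: product_sigma_finite_def prob_space_imp_sigma_finite P)
  define J where "J = I - {k}"
  define g where "g i j l v = (if l = k then h v else 1) * (if l = i then W v else 1) * (if l = j then W v else (1::real))" for i j l v
  have Wi: "integrable M W"
  proof (rule Bochner_Integration.integrable_bound[of _ "\<lambda>v. 1 + (W v)\<^sup>2"])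
    show "integrable M (\<lambda>v. 1 + (W v)\<^sup>2)" using W2 by simp
    show "AE x in M. norm (W x) \<le> norm (1 + (W x)\<^sup>2)"
      proof (intro AE_I2)
      fix x
      have "0 \<le> (\<bar>W x\<bar> - 1/2)\<^sup>2" by simp
      then have "\<bar>W x\<bar> \<le> 1 + (W x)\<^sup>2" by (simp add: power2_eq_square algebra_simps abs_mult_self_eq)
      then show "norm (W x) \<le> norm (1 + (W x)\<^sup>2)" by simp
    qed
  qed (use Wm in auto)
  have hi: "integrable M h"
    by (rule integrable_const_bound[where B=1]) (use hb hm in auto)
  have gint: "integrable M (g i j l)" if "i \<in> J" "j \<in> J" for i j l
  proof -
    have ik: "i \<noteq> k" "j \<noteq> k" using that by (auto simp: J_def)
    consider "l = k" | "l \<noteq> k" "l = i" "l = j" | "l \<noteq> k" "l = i" "l \<noteq> j" | "l \<noteq> k" "l \<noteq> i" "l = j"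
      | "l \<noteq> k" "l \<noteq> i" "l \<noteq> j" by blast
    then show ?thesis
    proof cases
      case 1 then show ?thesis using ik hi by (simp add: g_def[abs_def])
    next
      case 2 then show ?thesis using W2 by (simp add: g_def[abs_def] power2_eq_square)
    qed (use Wi in \<open>auto simp: g_def[abs_def]\<close>)
  qed
  have prodeq: "h (x k) * W (x i) * W (x j) = (\<Prod>l\<in>I. g i j l (x l))" if "i \<in> J" "j \<in> J" for x i j
  proof -
    have "i \<in> I" "j \<in> I" using that by (auto simp: J_def)
    then show ?thesis
      unfolding g_def prod.distrib using kI fin by (simp add: prod.delta)
  qed
  have intg: "integral\<^sup>L (PiM I (\<lambda>_. M)) (\<lambda>x. \<Prod>l\<in>I. g i j l (x l))
      = (if i = j then integral\<^sup>L M h * integral\<^sup>L M (\<lambda>v. (W v)\<^sup>2) else 0)" if "i \<in> J" "j \<in> J" for i j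
  proof -
    have ik: "i \<noteq> k" "j \<noteq> k" "i \<in> I" "j \<in> I" using that by (auto simp: J_def)
    have "integral\<^sup>L (PiM I (\<lambda>_. M)) (\<lambda>x. \<Prod>l\<in>I. g i j l (x l)) = (\<Prod>l\<in>I. integral\<^sup>L M (g i j l))"
      by (rule PS.product_integral_prod[OF fin]) (use gint that in auto)
    also have "\<dots> = (if i = j then integral\<^sup>L M h * integral\<^sup>L M (\<lambda>v. (W v)\<^sup>2) else 0)"
    proof (cases "i = j")
      case True
      have "integral\<^sup>L M (g i j l) = (if l = k then integral\<^sup>L M h else 1) * (if l = i then integral\<^sup>L M (\<lambda>v. (W v)\<^sup>2) else 1)" for l
        using True ik by (auto simp: g_def[abs_def] power2_eq_square prob_space)
      then show ?thesis using True ik fin kI by (simp add: prod.distrib prod.delta)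
    next
      case False
      have "integral\<^sup>L M (g i j i) = 0" using False ik W0 by (simp add: g_def[abs_def])
      then show ?thesis using False ik fin by (auto intro: prod_zero)
    qed
    finally show ?thesis .
  qed
  have eq: "h (x k) * (\<Sum>i\<in>J. W (x i))\<^sup>2 = (\<Sum>i\<in>J. \<Sum>j\<in>J. \<Prod>l\<in>I. g i j l (x l))" for x
  proof -
    have "h (x k) * (\<Sum>i\<in>J. W (x i))\<^sup>2 = (\<Sum>i\<in>J. \<Sum>j\<in>J. h (x k) * W (x i) * W (x j))"
      unfolding power2_eq_square sum_product by (simp add: sum_distrib_left mult.assoc)
    also have "\<dots> = (\<Sum>i\<in>J. \<Sum>j\<in>J. \<Prod>l\<in>I. g i j l (x l))"
      by (intro sum.cong refl) (simp add: prodeq)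
    finally show ?thesis .
  qed
  have int1: "integrable (PiM I (\<lambda>_. M)) (\<lambda>x. \<Prod>l\<in>I. g i j l (x l))" if "i \<in> J" "j \<in> J" for i j
    by (rule PS.product_integrable_prod[OF fin]) (use gint that in auto)
  have "integrable (PiM I (\<lambda>_. M)) (\<lambda>x. \<Sum>i\<in>J. \<Sum>j\<in>J. \<Prod>l\<in>I. g i j l (x l))"
    using int1 by (intro Bochner_Integration.integrable_sum) auto
  moreover have "integral\<^sup>L (PiM I (\<lambda>_. M)) (\<lambda>x. \<Sum>i\<in>J. \<Sum>j\<in>J. \<Prod>l\<in>I. g i j l (x l))
     = (\<Sum>i\<in>J. \<Sum>j\<in>J. (if i = j then integral\<^sup>L M h * integral\<^sup>L M (\<lambda>v. (W v)\<^sup>2) else 0))"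
  proof -
    have "integral\<^sup>L (PiM I (\<lambda>_. M)) (\<lambda>x. \<Sum>i\<in>J. \<Sum>j\<in>J. \<Prod>l\<in>I. g i j l (x l))
      = (\<Sum>i\<in>J. integral\<^sup>L (PiM I (\<lambda>_. M)) (\<lambda>x. \<Sum>j\<in>J. \<Prod>l\<in>I. g i j l (x l)))"
      using int1 by (intro Bochner_Integration.integral_sum Bochner_Integration.integrable_sum) auto
    also have "\<dots> = (\<Sum>i\<in>J. \<Sum>j\<in>J. integral\<^sup>L (PiM I (\<lambda>_. M)) (\<lambda>x. \<Prod>l\<in>I. g i j l (x l)))"
      using int1 by (intro sum.cong refl Bochner_Integration.integral_sum) auto
    finally show ?thesis using intg by simp
  qed
  moreover have "\<dots> = integral\<^sup>L M h * real (card J) * integral\<^sup>L M (\<lambda>v. (W v)\<^sup>2)"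
    using fin by (simp add: J_def)
  ultimately have "integrable (PiM I (\<lambda>_. M)) (\<lambda>x. h (x k) * (\<Sum>i\<in>J. W (x i))\<^sup>2)
     \<and> integral\<^sup>L (PiM I (\<lambda>_. M)) (\<lambda>x. h (x k) * (\<Sum>i\<in>J. W (x i))\<^sup>2)
       = integral\<^sup>L M h * real (card J) * integral\<^sup>L M (\<lambda>v. (W v)\<^sup>2)"
    by (simp only: eq)
  then show ?thesis by (simp add: J_def)
qed
lemma cdf_mono:
  assumes "prob_space M" "sets M = sets borel" "a \<le> b"
  shows "cdf_of M a \<le> cdf_of M b"
proof -
  interpret prob_space M by fact
  show ?thesis unfolding cdf_of_def
    using assms by (intro finite_measure_mono) auto
qed

lemma potter_lower:
  fixes M :: "real measure" and L :: "real \<Rightarrow> real" and \<alpha> :: real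
  assumes P: "prob_space M" and sM: "sets M = sets borel"
    and sv: "slowly_varying L" and alpha: "\<alpha> > 0"
    and tail: "\<forall>x>0. 1 - cdf_of M x = L x * x powr (- \<alpha>)"
  shows "\<exists>c>0. \<exists>z0>0. \<forall>z\<ge>z0. c * z powr (-(\<alpha>+1)) \<le> 1 - cdf_of M z"
proof -
  have ev1: "\<forall>\<^sub>F x in at_top. L x > 0" using sv by (simp add: slowly_varying_def)
  have "((\<lambda>x. L (2 * x) / L x) \<longlongrightarrow> 1) at_top" using sv by (simp add: slowly_varying_def)
  then have ev2: "\<forall>\<^sub>F x in at_top. L (2 * x) / L x > 1/2"
    by (rule order_tendstoD) simp
  obtain N where N: "\<And>x. x \<ge> N \<Longrightarrow> L x > 0 \<and> L (2 * x) / L x > 1/2"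
    using eventually_conj[OF ev1 ev2] by (auto simp: eventually_at_top_linorder)
  define z0 where "z0 = max N 1"
  have z0: "z0 > 0" "z0 \<ge> N" "z0 \<ge> 1" by (auto simp: z0_def)
  have Lk: "L (2^k * z0) \<ge> L z0 / 2^k" for k :: nat
  proof (induction k)
    case 0 then show ?case by simp
  next
    case (Suc k)
    have ge: "2^k * z0 \<ge> N" using z0 by (smt (verit) mult_le_cancel_right1 one_le_power)
    have pos: "L (2^k * z0) > 0" and r: "L (2 * (2^k * z0)) / L (2^k * z0) > 1/2" using N[OF ge] by auto
    have "L (2 * (2^k * z0)) > L (2^k * z0) / 2" using r pos by (simp add: field_simps)
    moreover have "L (2^k * z0) / 2 \<ge> L z0 / 2^Suc k" using Suc by (simp add: field_simps)
    ultimately show ?case by (simp add: mult.assoc)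
  qed
  have Lz0: "L z0 > 0" using N z0 by auto
  define c where "c = L z0 * z0 * 2 powr (-\<alpha>-1)"
  have cpos: "c > 0" using Lz0 z0 by (simp add: c_def)
  have "\<forall>z\<ge>z0. c * z powr (-(\<alpha>+1)) \<le> 1 - cdf_of M z"
  proof (intro allI impI)
    fix z assume zz: "z \<ge> z0"
    have zp: "z > 0" using zz z0 by simp
    define r where "r = log 2 (z / z0)"
    have r0: "r \<ge> 0" using zz z0 by (simp add: r_def)
    define k where "k = nat \<lceil>r\<rceil>"
    have rk: "r \<le> real k" "real k < r + 1" using r0 by (auto simp: k_def) linarith+
    have pk: "(2::real)^k = 2 powr real k" by (simp add: powr_realpow)
    have "z / z0 = 2 powr r" using zp z0 by (simp add: r_def)
    also have "\<dots> \<le> 2^k" unfolding pk using rk by (intro powr_mono) auto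
    finally have k1: "z \<le> 2^k * z0" using z0 by (simp add: field_simps)
    have "2 powr real k < 2 powr (r + 1)" using rk by (intro powr_less_mono) auto
    also have "\<dots> = 2 * (z / z0)" using zp z0 by (simp add: r_def powr_add)
    finally have k2: "2^k * z0 < 2 * z" unfolding pk[symmetric] using z0 by (simp add: field_simps)
    define w where "w = 2^k * z0"
    have wp: "w > 0" using z0 by (simp add: w_def)
    have "1 - cdf_of M w \<le> 1 - cdf_of M z" using cdf_mono[OF P sM k1] by (simp add: w_def)
    moreover have "1 - cdf_of M w = L w * w powr (-\<alpha>)" using tail wp by simp
    moreover have "L w \<ge> L z0 / 2^k" using Lk by (simp add: w_def)
    moreover have "(2::real)^k \<le> 2 * z / z0" using k2 z0 by (simp add: field_simps w_def)
    moreover have "w powr (-\<alpha>) \<ge> (2 * z) powr (-\<alpha>)" using k2 wp alpha by (intro powr_mono2') (auto simp: w_def)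
    ultimately have "1 - cdf_of M z \<ge> L z0 / (2 * z / z0) * (2 * z) powr (-\<alpha>)"
    proof -
      assume a: "1 - cdf_of M w \<le> 1 - cdf_of M z" "1 - cdf_of M w = L w * w powr - \<alpha>"
        "L z0 / 2 ^ k \<le> L w" "(2::real) ^ k \<le> 2 * z / z0" "(2 * z) powr - \<alpha> \<le> w powr - \<alpha>"
      have "L z0 / (2 * z / z0) \<le> L z0 / 2^k"
        using a(4) Lz0 zp z0 by (intro divide_left_mono) auto
      also have "\<dots> \<le> L w" by fact
      finally have b: "L z0 / (2 * z / z0) \<le> L w" .
      have "L z0 / (2 * z / z0) * (2 * z) powr (-\<alpha>) \<le> L w * w powr (-\<alpha>)"
      proof (rule mult_mono)
        have "0 \<le> L z0 / (2 * z / z0)" using Lz0 zp z0 by simp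
        then show "0 \<le> L w" using b by linarith
      qed (use b a(5) in auto)
      then show ?thesis using a(1,2) by linarith
    qed
    moreover have "L z0 / (2 * z / z0) * (2 * z) powr (-\<alpha>) = c * z powr (-(\<alpha>+1))"
    proof -
      have e1: "(2*z) powr (-\<alpha>) = 2 powr (-\<alpha>) * z powr (-\<alpha>)" using zp by (simp add: powr_mult)
      have "z powr (-(\<alpha>+1)) = z powr (-\<alpha> - 1)" by (rule arg_cong[where f="\<lambda>e. z powr e"]) simp
      also have "\<dots> = z powr (-\<alpha>) / z powr 1" by (rule powr_diff)
      also have "\<dots> = z powr (-\<alpha>) / z" using zp by simp
      finally have e2: "z powr (-(\<alpha>+1)) = z powr (-\<alpha>) / z" .
      have e3: "(2::real) powr (-\<alpha>-1) = 2 powr (-\<alpha>) / 2"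
        by (simp add: powr_diff)
      show ?thesis unfolding c_def e1 e2 e3 using zp z0 by (simp add: field_simps)
    qed
    ultimately show "c * z powr (-(\<alpha>+1)) \<le> 1 - cdf_of M z" by simp
  qed
  then show ?thesis using cpos z0 by blast
qed
lemma ptilde_lower:
  fixes M :: "real measure" and \<mu> t \<gamma> :: real and n :: nat
  assumes P: "prob_space M" and sM: "sets M = sets borel"
    and W2: "integrable M (\<lambda>v. (v - \<mu>)\<^sup>2)" and mean: "integral\<^sup>L M (\<lambda>v. v - \<mu>) = 0"
    and n: "n \<ge> 1" and t: "t > 0"
    and hV: "real (n - 1) * integral\<^sup>L M (\<lambda>v. (v - \<mu>)\<^sup>2) \<le> t\<^sup>2 / 2"
  shows "ptilde M n \<gamma> \<ge> (1 - cdf_of M (\<gamma> - real (n - 1) * \<mu> + t)) / 2"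
proof -
  interpret prob_space M by (rule P)
  interpret PS: product_sigma_finite "\<lambda>_::nat. M"
    by (simp add: product_sigma_finite_def prob_space_imp_sigma_finite P)
  interpret PP: prob_space "PiM {..<n} (\<lambda>_. M)"
    by (intro prob_space_PiM) (simp add: P)
  have spM: "space M = UNIV" using sets_eq_imp_space_eq[OF sM] by simp
  define a where "a = \<gamma> - real (n - 1) * \<mu> + t"
  define h :: "real \<Rightarrow> real" where "h = indicator {a..}"
  define W where "W v = v - \<mu>" for v
  define I where "I = {..<n}"
  define J where "J = I - {0}"
  define Pm where "Pm = PiM I (\<lambda>_. M)"
  define S where "S = {x \<in> space Pm. \<gamma> \<le> (\<Sum>i<n. x i)}"
  have I0: "0 \<in> I" using n by (auto simp: I_def)
  have cardJ: "card J = n - 1" using I0 by (simp add: J_def I_def)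
  have comp: "(\<lambda>x. x i) \<in> borel_measurable Pm" if "i \<in> I" for i
    using measurable_component_singleton[OF that, of "\<lambda>_. M"] sM
    by (simp add: Pm_def cong: measurable_cong_sets)
  have sm[measurable]: "(\<lambda>x. \<Sum>i<n. x i) \<in> borel_measurable Pm"
    using comp by (intro borel_measurable_sum) (auto simp: I_def)
  have Sm: "S \<in> sets Pm" unfolding S_def by measurable
  have hm: "h \<in> borel_measurable M" unfolding h_def using sM by (simp cong: measurable_cong_sets)
  have Wm: "W \<in> borel_measurable M" unfolding W_def using sM by (simp cong: measurable_cong_sets)
  have SM:
    "integrable Pm (\<lambda>x. h (x 0) * (\<Sum>i\<in>J. W (x i))\<^sup>2) \<and>
     integral\<^sup>L Pm (\<lambda>x. h (x 0) * (\<Sum>i\<in>J. W (x i))\<^sup>2) = integral\<^sup>L M h * real (card J) * integral\<^sup>L M (\<lambda>v. (W v)\<^sup>2)"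
    unfolding Pm_def J_def
    by (rule second_moment_prod[OF P _ I0 hm _ Wm]) (use W2 mean in \<open>auto simp: I_def W_def[abs_def] h_def indicator_def\<close>)
  have gh: "(\<lambda>x. h (x 0)) = (\<lambda>x. \<Prod>l\<in>I. (if l = 0 then h else (\<lambda>_. 1)) (x l))"
  proof (rule ext)
    fix x
    have "(\<Prod>l\<in>I. (if l = 0 then h else (\<lambda>_. 1)) (x l)) = (\<Prod>l\<in>I. if l = 0 then h (x l) else 1)"
      by (intro prod.cong) auto
    also have "\<dots> = h (x 0)" using I0 by (simp add: I_def)
    finally show "h (x 0) = (\<Prod>l\<in>I. (if l = 0 then h else (\<lambda>_. 1)) (x l))" by simp
  qed
  have hint: "integrable M h" unfolding h_def using sM by (intro integrable_real_indicator) (auto simp: emeasure_eq_measure)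
  have hPint: "integrable Pm (\<lambda>x. h (x 0))" unfolding gh Pm_def
    by (rule PS.product_integrable_prod) (use hint in \<open>auto simp: I_def\<close>)
  have hPval: "integral\<^sup>L Pm (\<lambda>x. h (x 0)) = integral\<^sup>L M h" unfolding gh Pm_def
  proof (subst PS.product_integral_prod)
    show "(\<Prod>i\<in>I. integral\<^sup>L M (if i = 0 then h else (\<lambda>_. 1))) = integral\<^sup>L M h"
      using I0 by (simp add: I_def prob_space if_distrib prod.delta cong: if_cong)
  qed (use hint in \<open>auto simp: I_def\<close>)
  define m where "m = integral\<^sup>L M h"
  have m0: "m \<ge> 0" unfolding m_def h_def by simp
  have pt: "ptilde M n \<gamma> = integral\<^sup>L Pm (indicator S)"
    using Sm by (simp add: ptilde_def S_def Pm_def I_def)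
  have "integral\<^sup>L Pm (\<lambda>x. h (x 0) - h (x 0) * (\<Sum>i\<in>J. W (x i))\<^sup>2 / t\<^sup>2) \<le> integral\<^sup>L Pm (indicator S)"
  proof (rule integral_mono)
    show "integrable Pm (\<lambda>x. h (x 0) - h (x 0) * (\<Sum>i\<in>J. W (x i))\<^sup>2 / t\<^sup>2)"
      using hPint SM by (intro Bochner_Integration.integrable_diff Bochner_Integration.integrable_divide) auto
    show "integrable Pm (indicator S :: _ \<Rightarrow> real)" using Sm by (intro integrable_real_indicator) (auto simp: PP.emeasure_eq_measure Pm_def I_def)
  next
    fix x assume xs: "x \<in> space Pm"
    show "h (x 0) - h (x 0) * (\<Sum>i\<in>J. W (x i))\<^sup>2 / t\<^sup>2 \<le> indicator S x"
    proof (cases "x 0 \<ge> a")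
      case False then show ?thesis by (simp add: h_def indicator_def)
    next
      case True
      show ?thesis
      proof (cases "(\<Sum>i\<in>J. W (x i)) \<ge> -t")
        case True2: True
        have "(\<Sum>i<n. x i) = x 0 + (\<Sum>i\<in>J. x i)"
          using I0 by (simp add: J_def I_def sum.remove)
        also have "(\<Sum>i\<in>J. x i) = (\<Sum>i\<in>J. W (x i)) + real (n - 1) * \<mu>"
          by (simp add: W_def sum_subtractf cardJ)
        finally have "\<gamma> \<le> (\<Sum>i<n. x i)" using True True2 by (simp add: a_def)
        then have "(indicator S x :: real) = 1" using xs by (simp add: S_def)
        moreover have "0 \<le> h (x 0) * (\<Sum>i\<in>J. W (x i))\<^sup>2 / t\<^sup>2" by (simp add: h_def)
        moreover have "h (x 0) = 1" using True by (simp add: h_def)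
        ultimately show ?thesis by simp
      next
        case False2: False
        have "t\<^sup>2 < (\<Sum>i\<in>J. W (x i))\<^sup>2"
          using False2 t by (smt (verit) power2_le_imp_le power2_minus abs_le_square_iff)
        then have "1 < (\<Sum>i\<in>J. W (x i))\<^sup>2 / t\<^sup>2" using t by simp
        then show ?thesis using True by (simp add: h_def indicator_def)
      qed
    qed
  qed
  moreover have "integral\<^sup>L Pm (\<lambda>x. h (x 0) - h (x 0) * (\<Sum>i\<in>J. W (x i))\<^sup>2 / t\<^sup>2)
      = m - m * real (n - 1) * integral\<^sup>L M (\<lambda>v. (v - \<mu>)\<^sup>2) / t\<^sup>2"
    using hPint SM hPval by (simp add: m_def cardJ W_def)
  moreover have "m * real (n - 1) * integral\<^sup>L M (\<lambda>v. (v - \<mu>)\<^sup>2) / t\<^sup>2 \<le> m / 2"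
  proof -
    have "m * (real (n - 1) * integral\<^sup>L M (\<lambda>v. (v - \<mu>)\<^sup>2)) \<le> m * (t\<^sup>2 / 2)"
      using hV m0 by (intro mult_left_mono) auto
    then show ?thesis using t by (simp add: field_simps)
  qed
  moreover have "m \<ge> 1 - cdf_of M a"
  proof -
    have "1 - cdf_of M a = measure M (space M - {..a})"
      using sM by (subst finite_measure_compl) (auto simp: cdf_of_def prob_space)
    also have "\<dots> \<le> measure M {a..}"
      using sM spM by (intro finite_measure_mono) auto
    finally show ?thesis using sM by (simp add: m_def h_def)
  qed
  ultimately show ?thesis using pt by (simp add: a_def)
qed
lemma truncated_prob:
  fixes M :: "real measure"
  assumes P: "prob_space M" and sM: "sets M = sets borel" and Fu: "cdf_of M u > 0"
  shows "prob_space (truncated M u)" and "sets (truncated M u) = sets borel"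
proof -
  interpret prob_space M by (rule P)
  have spM: "space M = UNIV" using sets_eq_imp_space_eq[OF sM] by simp
  show st: "sets (truncated M u) = sets borel" by (simp add: truncated_def sM)
  have gm: "(\<lambda>x. ennreal (indicator {..u} x / cdf_of M u)) \<in> borel_measurable M"
    using sM by (simp cong: measurable_cong_sets)
  have "emeasure (truncated M u) (space (truncated M u)) = (\<integral>\<^sup>+ x. ennreal (indicator {..u} x / cdf_of M u) \<partial>M)"
    unfolding truncated_def using gm by (subst emeasure_density) (auto simp: spM sM)
  also have "\<dots> = (\<integral>\<^sup>+ x. ennreal (1 / cdf_of M u) * indicator {..u} x \<partial>M)"
    by (intro nn_integral_cong) (auto simp: indicator_def)
  also have "\<dots> = ennreal (1 / cdf_of M u) * emeasure M {..u}"
    using sM by (subst nn_integral_cmult_indicator) auto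
  also have "\<dots> = 1" using Fu by (simp add: emeasure_eq_measure cdf_of_def ennreal_mult''[symmetric])
  finally show "prob_space (truncated M u)" by (rule prob_spaceI)
qed

lemma chernoff_trunc:
  fixes M :: "real measure"
  assumes P: "prob_space M" and sM: "sets M = sets borel" and Fu: "cdf_of M u > 0"
    and s: "s > 0" and m0: "m \<ge> 0"
    and mgf: "(\<integral>\<^sup>+ v. ennreal (exp (s * (v - \<mu>))) \<partial>truncated M u) \<le> ennreal m"
  shows "ptilde (truncated M u) n \<gamma> \<le> exp (- s * (\<gamma> - real n * \<mu>)) * m ^ n"
proof -
  define T where "T = truncated M u"
  have PT: "prob_space T" and sT: "sets T = sets borel" using truncated_prob[OF P sM Fu] by (auto simp: T_def)
  interpret PS: product_sigma_finite "\<lambda>_::nat. T"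
    by (simp add: product_sigma_finite_def prob_space_imp_sigma_finite PT)
  define Q where "Q = PiM {..<n} (\<lambda>_. T)"
  interpret PQ: prob_space Q unfolding Q_def by (intro prob_space_PiM) (simp add: PT)
  define S where "S = {x \<in> space Q. \<gamma> \<le> (\<Sum>i<n. x i)}"
  have comp: "(\<lambda>x. x i) \<in> borel_measurable Q" if "i \<in> {..<n}" for i
    using measurable_component_singleton[OF that, of "\<lambda>_. T"] sT
    by (simp add: Q_def cong: measurable_cong_sets)
  have sm[measurable]: "(\<lambda>x. \<Sum>i<n. x i) \<in> borel_measurable Q"
    using comp by (intro borel_measurable_sum) auto
  have Sm: "S \<in> sets Q" unfolding S_def by measurable
  have fm: "(\<lambda>v. ennreal (exp (s * (v - \<mu>)))) \<in> borel_measurable T"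
    using sT by (simp cong: measurable_cong_sets)
  define c where "c = exp (- s * (\<gamma> - real n * \<mu>))"
  have "emeasure Q S = (\<integral>\<^sup>+ x. indicator S x \<partial>Q)" using Sm by simp
  also have "\<dots> \<le> (\<integral>\<^sup>+ x. ennreal c * (\<Prod>i\<in>{..<n}. ennreal (exp (s * (x i - \<mu>)))) \<partial>Q)"
  proof (intro nn_integral_mono)
    fix x assume xQ: "x \<in> space Q"
    have eq: "c * (\<Prod>i\<in>{..<n}. exp (s * (x i - \<mu>))) = exp (s * ((\<Sum>i<n. x i) - \<gamma>))"
      by (simp add: c_def exp_sum[symmetric] exp_add[symmetric] sum_distrib_left sum_subtractf algebra_simps)
    have "ennreal c * (\<Prod>i\<in>{..<n}. ennreal (exp (s * (x i - \<mu>)))) = ennreal (exp (s * ((\<Sum>i<n. x i) - \<gamma>)))"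
    proof -
      have "(\<Prod>i\<in>{..<n}. ennreal (exp (s * (x i - \<mu>)))) = ennreal (\<Prod>i\<in>{..<n}. exp (s * (x i - \<mu>)))"
        by (simp add: prod_ennreal)
      moreover have "ennreal c * ennreal (\<Prod>i\<in>{..<n}. exp (s * (x i - \<mu>))) = ennreal (c * (\<Prod>i\<in>{..<n}. exp (s * (x i - \<mu>))))"
        by (rule ennreal_mult''[symmetric]) (simp add: prod_nonneg)
      ultimately show ?thesis using eq by simp
    qed
    moreover have "indicator S x \<le> ennreal (exp (s * ((\<Sum>i<n. x i) - \<gamma>)))"
    proof (cases "x \<in> S")
      case True
      then have "0 \<le> s * ((\<Sum>i<n. x i) - \<gamma>)" using s by (simp add: S_def)
      then show ?thesis using True by simp
    qed simp
    ultimately show "indicator S x \<le> ennreal c * (\<Prod>i\<in>{..<n}. ennreal (exp (s * (x i - \<mu>))))" by simp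
  qed
  also have "\<dots> = ennreal c * (\<integral>\<^sup>+ x. (\<Prod>i\<in>{..<n}. ennreal (exp (s * (x i - \<mu>)))) \<partial>Q)"
  proof (rule nn_integral_cmult)
    show "(\<lambda>x. \<Prod>i\<in>{..<n}. ennreal (exp (s * (x i - \<mu>)))) \<in> borel_measurable Q"
      using comp by (intro borel_measurable_prod_ennreal measurable_compose[OF _ fm[unfolded sT]]) 
        (auto intro: measurable_compose[OF _ fm] simp: sT cong: measurable_cong_sets)
  qed
  finally have A: "emeasure Q S \<le> ennreal c * (\<integral>\<^sup>+ x. (\<Prod>i\<in>{..<n}. ennreal (exp (s * (x i - \<mu>)))) \<partial>Q)" .
  have "(\<integral>\<^sup>+ x. (\<Prod>i\<in>{..<n}. ennreal (exp (s * (x i - \<mu>)))) \<partial>Q)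
      = (\<Prod>i\<in>{..<n}. (\<integral>\<^sup>+ v. ennreal (exp (s * (v - \<mu>))) \<partial>T))"
    unfolding Q_def by (rule PS.product_nn_integral_prod) (use fm in auto)
  also have "\<dots> \<le> ennreal m ^ n"
    using mgf by (simp add: T_def power_mono)
  finally have B: "(\<integral>\<^sup>+ x. (\<Prod>i\<in>{..<n}. ennreal (exp (s * (x i - \<mu>)))) \<partial>Q) \<le> ennreal m ^ n" .
  have "emeasure Q S \<le> ennreal c * ennreal m ^ n"
    using A B by (meson order_trans mult_left_mono zero_le)
  then have "emeasure Q S \<le> ennreal (c * m ^ n)"
    using m0 by (simp add: ennreal_mult'' ennreal_power)
  then have "measure Q S \<le> c * m ^ n"
    using m0 by (simp add: PQ.emeasure_eq_measure c_def)
  then show ?thesis by (simp add: ptilde_def T_def Q_def S_def c_def)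
qed
lemma mgf_trunc:
  fixes M :: "real measure" and \<mu> s D \<delta> u :: real
  assumes P: "prob_space M" and sM: "sets M = sets borel" and Fu: "cdf_of M u > 0"
    and Fmu: "cdf_of M \<mu> > 0"
    and s: "s > 0" and d: "\<delta> > 0" and uD: "u - \<mu> \<le> D"
    and i1: "integrable M (\<lambda>v. v - \<mu>)" and mean0: "integral\<^sup>L M (\<lambda>v. v - \<mu>) = 0"
    and i2: "integrable M (\<lambda>v. (v - \<mu>)\<^sup>2)"
    and i3: "integrable M (\<lambda>v. \<bar>v - \<mu>\<bar> powr (2 + \<delta>))"
  shows "(\<integral>\<^sup>+ v. ennreal (exp (s * (v - \<mu>))) \<partial>truncated M u)
     \<le> ennreal (1 + s\<^sup>2 / (2 * cdf_of M \<mu>) * (exp 1 * integral\<^sup>L M (\<lambda>v. (v - \<mu>)\<^sup>2)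
          + integral\<^sup>L M (\<lambda>v. \<bar>v - \<mu>\<bar> powr (2 + \<delta>)) * s powr \<delta> * exp (s * D)))"
proof -
  interpret prob_space M by (rule P)
  have spM: "space M = UNIV" using sets_eq_imp_space_eq[OF sM] by simp
  define F where "F = cdf_of M u"
  define V2 where "V2 = integral\<^sup>L M (\<lambda>v. (v - \<mu>)\<^sup>2)"
  define K where "K = integral\<^sup>L M (\<lambda>v. \<bar>v - \<mu>\<bar> powr (2 + \<delta>))"
  define B where "B = exp 1 * V2 + K * s powr \<delta> * exp (s * D)"
  have V20: "V2 \<ge> 0" unfolding V2_def by simp
  have K0: "K \<ge> 0" unfolding K_def by simp
  have B0: "B \<ge> 0" unfolding B_def using V20 K0 by simp
  define \<phi> where "\<phi> v = indicator {..u} v / F * exp (s * (v - \<mu>))" for v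
  have \<phi>0: "\<phi> v \<ge> 0" for v by (simp add: \<phi>_def F_def Fu[THEN less_imp_le])
  have \<phi>m: "\<phi> \<in> borel_measurable M" unfolding \<phi>_def[abs_def] using sM by (simp cong: measurable_cong_sets)
  have \<phi>b: "\<phi> v \<le> exp (s * (u - \<mu>)) / F" for v
    using s Fu by (auto simp: \<phi>_def F_def indicator_def divide_right_mono)
  have \<phi>i: "integrable M \<phi>"
    by (rule integrable_const_bound[where B="exp (s * (u - \<mu>)) / F"]) (use \<phi>0 \<phi>b \<phi>m in auto)
  have gm: "(\<lambda>x. ennreal (indicator {..u} x / cdf_of M u)) \<in> borel_measurable M"
    using sM by (simp cong: measurable_cong_sets)
  have "(\<integral>\<^sup>+ v. ennreal (exp (s * (v - \<mu>))) \<partial>truncated M u)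
      = (\<integral>\<^sup>+ v. ennreal (indicator {..u} v / cdf_of M u) * ennreal (exp (s * (v - \<mu>))) \<partial>M)"
    unfolding truncated_def using gm sM by (subst nn_integral_density) (auto cong: measurable_cong_sets)
  also have "\<dots> = (\<integral>\<^sup>+ v. ennreal (\<phi> v) \<partial>M)"
    by (intro nn_integral_cong) (simp add: \<phi>_def F_def ennreal_mult''[symmetric])
  also have "\<dots> = ennreal (integral\<^sup>L M \<phi>)"
    using \<phi>i \<phi>0 by (intro nn_integral_eq_integral) auto
  finally have eq: "(\<integral>\<^sup>+ v. ennreal (exp (s * (v - \<mu>))) \<partial>truncated M u) = ennreal (integral\<^sup>L M \<phi>)" .
  have fin: "integral\<^sup>L M \<phi> \<le> 1 + s\<^sup>2 / (2 * cdf_of M \<mu>) * B"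
  proof (cases "u \<le> \<mu>")
    case True
    have "integral\<^sup>L M \<phi> \<le> integral\<^sup>L M (\<lambda>v. indicator {..u} v / F)"
    proof (rule integral_mono)
      show "integrable M (\<lambda>v. indicator {..u} v / F)"
        using sM by (intro Bochner_Integration.integrable_divide integrable_real_indicator) (auto simp: emeasure_eq_measure)
      fix v
      show "\<phi> v \<le> indicator {..u} v / F"
      proof (cases "v \<le> u")
        case vu: True
        have "exp (s * (v - \<mu>)) \<le> 1" using vu True s by (simp add: mult_nonneg_nonpos)
        then show ?thesis using vu Fu by (simp add: \<phi>_def F_def divide_right_mono)
      qed (simp add: \<phi>_def)
    qed (use \<phi>i in auto)
    also have "\<dots> = 1" using Fu sM by (simp add: F_def cdf_of_def)
    finally show ?thesis using B0 s Fmu by (smt (verit) divide_nonneg_nonneg mult_nonneg_nonneg zero_le_power2)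
  next
    case False
    have FF: "F \<ge> cdf_of M \<mu>" unfolding F_def using False by (intro cdf_mono[OF P sM]) auto
    define R where "R v = (indicator {..u} v + s * (v - \<mu>) + s\<^sup>2 / 2 * (exp 1 * (v - \<mu>)\<^sup>2
        + \<bar>v - \<mu>\<bar> powr (2 + \<delta>) * s powr \<delta> * exp (s * D))) / F" for v
    have Ri: "integrable M R" unfolding R_def[abs_def] using i1 i2 i3 sM
      by (intro Bochner_Integration.integrable_divide Bochner_Integration.integrable_add
          Bochner_Integration.integrable_mult_right integrable_real_indicator) (auto simp: emeasure_eq_measure)
    have "integral\<^sup>L M \<phi> \<le> integral\<^sup>L M R"
    proof (rule integral_mono[OF \<phi>i Ri])
      fix v
      define z where "z = v - \<mu>"
      show "\<phi> v \<le> R v"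
      proof (cases "v \<le> u")
        case True
        have zD: "z \<le> D" using True uD by (simp add: z_def)
        have "exp (s * z) \<le> 1 + s * z + (s * z)\<^sup>2 / 2 * exp (max (s * z) 0)" by (rule exp_quad_bound)
        also have "max (s * z) 0 = s * max z 0" using s by (simp add: max_def mult_le_0_iff)
        also have "(s * z)\<^sup>2 / 2 * exp (s * max z 0) = s\<^sup>2 / 2 * (z\<^sup>2 * exp (s * max z 0))"
          by (simp add: power_mult_distrib)
        also have "\<dots> \<le> s\<^sup>2 / 2 * (exp 1 * z\<^sup>2 + \<bar>z\<bar> powr (2 + \<delta>) * s powr \<delta> * exp (s * D))"
          by (intro mult_left_mono mgf_pt s zD d) simp
        finally have "exp (s * z) \<le> 1 + s * z + s\<^sup>2 / 2 * (exp 1 * z\<^sup>2 + \<bar>z\<bar> powr (2 + \<delta>) * s powr \<delta> * exp (s * D))"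
          by simp
        then show ?thesis using True Fu
          by (simp add: \<phi>_def R_def z_def F_def divide_right_mono)
      next
        case False
        have "0 \<le> s * (v - \<mu>)" using False \<open>\<not> u \<le> \<mu>\<close> s by simp
        moreover have "0 \<le> s\<^sup>2 / 2 * (exp 1 * (v - \<mu>)\<^sup>2 + \<bar>v - \<mu>\<bar> powr (2 + \<delta>) * s powr \<delta> * exp (s * D))"
          by simp
        ultimately show ?thesis using False Fu by (simp add: \<phi>_def R_def F_def)
      qed
    qed
    also have "integral\<^sup>L M R = (F + s * 0 + s\<^sup>2 / 2 * B) / F"
    proof -
      have "integral\<^sup>L M R = (integral\<^sup>L M (indicator {..u}) + s * integral\<^sup>L M (\<lambda>v. v - \<mu>)
         + s\<^sup>2 / 2 * (exp 1 * V2 + K * s powr \<delta> * exp (s * D))) / F"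
        unfolding R_def[abs_def] V2_def K_def using i1 i2 i3 sM
        by (simp add: emeasure_eq_measure Bochner_Integration.integral_add
              Bochner_Integration.integrable_add integrable_real_indicator)
      then show ?thesis using mean0 sM by (simp add: B_def F_def cdf_of_def)
    qed
    also have "\<dots> = 1 + s\<^sup>2 / (2 * F) * B" using Fu by (simp add: F_def field_simps)
    also have "\<dots> \<le> 1 + s\<^sup>2 / (2 * cdf_of M \<mu>) * B"
      using FF Fmu B0 by (intro add_left_mono mult_right_mono divide_left_mono) auto
    finally show ?thesis .
  qed
  show ?thesis unfolding eq using fin unfolding B_def V2_def K_def by (rule ennreal_leI)
qed
lemma ln_le_2sqrt: "0 < x \<Longrightarrow> ln x \<le> 2 * sqrt (x::real)"
proof -
  assume x: "0 < x"
  have "ln x = 2 * ln (sqrt x)" using x by (simp add: ln_sqrt)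
  also have "\<dots> \<le> 2 * sqrt x" using x by (simp add: ln_bound)
  finally show ?thesis .
qed

lemma ln_ge_1: "(n::nat) \<ge> 3 \<Longrightarrow> ln (real n) \<ge> 1"
proof -
  assume n: "n \<ge> 3"
  have "exp 1 < (3::real)" using e_less_272 by simp
  also have "3 \<le> real n" using n by simp
  finally have "exp 1 < real n" .
  then have "ln (exp 1) < ln (real n)" using n by (subst ln_less_cancel_iff) auto
  then show ?thesis by simp
qed

lemma upper_arith:
  fixes x A G Fm :: real and n :: nat
  assumes x: "x > 1" and A: "A > 0" and G: "G \<ge> 0" and Fm: "Fm > 0"
    and key: "A\<^sup>2 * G / (2 * Fm) * real n * ln x \<le> x\<^sup>2"
  shows "exp (- (A * ln x / x) * x) * (1 + (A * ln x / x)\<^sup>2 * G / (2 * Fm)) ^ n \<le> x powr (1 - A)"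
proof -
  define y where "y = (A * ln x / x)\<^sup>2 * G / (2 * Fm)"
  have y0: "y \<ge> 0" using G Fm by (simp add: y_def)
  have lx: "ln x > 0" using x by simp
  have "(1 + y) ^ n \<le> exp y ^ n"
    using y0 by (intro power_mono) (auto simp: add.commute)
  also have "\<dots> = exp (real n * y)" by (simp add: exp_of_nat_mult)
  also have "real n * y \<le> ln x"
  proof -
    have "real n * y = (A\<^sup>2 * G / (2 * Fm) * real n * ln x) * (ln x / x\<^sup>2)"
      using x by (simp add: y_def power2_eq_square field_simps)
    also have "\<dots> \<le> x\<^sup>2 * (ln x / x\<^sup>2)"
      using key lx x by (intro mult_right_mono) auto
    also have "\<dots> = ln x" using x by simp
    finally show ?thesis .
  qed
  then have "exp (real n * y) \<le> exp (ln x)" by simp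
  finally have b: "(1 + y) ^ n \<le> exp (ln x)" .
  have e1: "exp (- (A * ln x / x) * x) = exp (- (A * ln x))" using x by simp
  have "exp (- (A * ln x / x) * x) * (1 + y) ^ n \<le> exp (- (A * ln x)) * exp (ln x)"
    unfolding e1 using b by (intro mult_left_mono) auto
  also have "\<dots> = exp (- (A * ln x) + ln x)" by (simp only: exp_add)
  also have "- (A * ln x) + ln x = (1 - A) * ln x" by (simp add: algebra_simps)
  also have "exp ((1 - A) * ln x) = x powr (1 - A)" using x by (simp add: powr_def)
  finally show ?thesis by (simp add: y_def)
qed

lemma Qn_bound:
  fixes x H Q :: real and n :: nat
  assumes n: "n \<ge> 3" and Q: "Q \<ge> 0" and H1: "H \<ge> 1" and H2: "H \<ge> 2 * Q"
    and xH: "x \<ge> H * sqrt (real n * ln (real n))"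
  shows "Q * real n * ln x \<le> x\<^sup>2"
proof -
  have ln1: "ln (real n) \<ge> 1" using ln_ge_1[OF n] .
  have np: "real n > 0" using n by simp
  have "1 * 1 \<le> real n * ln (real n)" using ln1 n by (intro mult_mono) auto
  then have sq: "sqrt (real n * ln (real n)) \<ge> 1" by simp
  have hs1: "1 * 1 \<le> H * sqrt (real n * ln (real n))" using H1 sq by (intro mult_mono) auto
  then have xp: "x > 0" using xH by simp
  define y where "y = x\<^sup>2 / real n"
  have x2: "x\<^sup>2 = real n * y" using np by (simp add: y_def)
  have "x\<^sup>2 \<ge> (H * sqrt (real n * ln (real n)))\<^sup>2"
    using xH hs1 by (intro power_mono) auto
  also have "(H * sqrt (real n * ln (real n)))\<^sup>2 = H\<^sup>2 * (real n * ln (real n))"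
    using ln1 np by (simp add: power_mult_distrib)
  finally have "real n * y \<ge> H\<^sup>2 * (real n * ln (real n))" using x2 by simp
  then have yH: "y \<ge> H\<^sup>2 * ln (real n)" using np by (simp add: algebra_simps)
  have HH: "H\<^sup>2 \<ge> H" using H1 by (simp add: power2_eq_square)
  have "H\<^sup>2 * 1 \<le> H\<^sup>2 * ln (real n)" using ln1 by (intro mult_left_mono) auto
  then have yp: "y \<ge> H\<^sup>2" using yH by simp
  have "H\<^sup>2 \<ge> 1" using H1 by (simp add: one_le_power)
  then have ypos: "y > 0" using yp by simp
  have lnx: "ln x = (ln (real n) + ln y) / 2"
  proof -
    have "2 * ln x = ln (x\<^sup>2)" using xp by (simp add: ln_realpow)
    also have "\<dots> = ln (real n) + ln y" using x2 np ypos by (simp add: ln_mult)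
    finally show ?thesis by simp
  qed
  have a: "Q * ln (real n) \<le> y"
  proof -
    have "Q * ln (real n) \<le> H\<^sup>2 * ln (real n)"
      using Q H2 HH H1 ln1 by (intro mult_right_mono) auto
    then show ?thesis using yH by simp
  qed
  have b: "Q * ln y \<le> y"
  proof -
    have "Q * ln y \<le> Q * (2 * sqrt y)" using Q ypos ln_le_2sqrt by (intro mult_left_mono) auto
    also have "\<dots> \<le> sqrt y * sqrt y"
    proof -
      have "sqrt (H\<^sup>2) \<le> sqrt y" using yp by (rule real_sqrt_le_mono)
      then have "sqrt y \<ge> H" using H1 by simp
      then have "2 * Q \<le> sqrt y" using H2 by simp
      then have "2 * Q * sqrt y \<le> sqrt y * sqrt y" by (rule mult_right_mono) (use ypos in simp)
      then show ?thesis by (simp add: algebra_simps)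
    qed
    also have "\<dots> = y" using ypos by simp
    finally show ?thesis .
  qed
  have "Q * real n * ln x = real n * (Q * ln (real n) + Q * ln y) / 2"
    by (simp add: lnx algebra_simps)
  also have "\<dots> \<le> real n * (y + y) / 2"
    using a b np by (intro divide_right_mono mult_left_mono add_mono) auto
  also have "\<dots> = x\<^sup>2" using x2 by simp
  finally show ?thesis .
qed

lemma sdelta_bound:
  fixes x A C \<delta> l :: real
  assumes x: "x \<ge> 1" and A: "A > 0" and C: "C > 0" and d: "\<delta> > 0" and l: "l > 0"
    and AC: "A * C / sqrt l \<le> \<delta> / 2"
  shows "(A * ln x / x) powr \<delta> * exp ((A * ln x / x) * (C * x / sqrt l)) \<le> (2 * A) powr \<delta>"
proof -
  have lx: "ln x \<ge> 0" using x by simp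
  have "(A * ln x / x) * (C * x / sqrt l) = (A * C / sqrt l) * ln x" using x by (simp add: field_simps)
  also have "\<dots> \<le> (\<delta> / 2) * ln x" using AC lx by (intro mult_right_mono) auto
  finally have "exp ((A * ln x / x) * (C * x / sqrt l)) \<le> exp ((\<delta> / 2) * ln x)" by simp
  also have "\<dots> = (sqrt x) powr \<delta>" using x by (simp add: powr_def ln_sqrt)
  finally have e: "exp ((A * ln x / x) * (C * x / sqrt l)) \<le> (sqrt x) powr \<delta>" .
  have "(A * ln x / x) powr \<delta> * exp ((A * ln x / x) * (C * x / sqrt l)) \<le> (A * ln x / x) powr \<delta> * (sqrt x) powr \<delta>"
    using e by (intro mult_left_mono) auto
  also have "\<dots> = (A * ln x / x * sqrt x) powr \<delta>" using x A lx by (intro powr_mult[symmetric])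
  also have "A * ln x / x * sqrt x = A * (ln x / sqrt x)"
  proof -
    have sx: "sqrt x > 0" using x by simp
    have q: "sqrt x / x = 1 / sqrt x" using sx x by (simp add: field_simps)
    have "A * ln x / x * sqrt x = A * ln x * (sqrt x / x)" by simp
    also have "\<dots> = A * (ln x / sqrt x)" unfolding q by simp
    finally show ?thesis .
  qed
  also have "(A * (ln x / sqrt x)) powr \<delta> \<le> (2 * A) powr \<delta>"
  proof (rule powr_mono2)
    have "ln x \<le> 2 * sqrt x" using x ln_le_2sqrt by simp
    then have "ln x / sqrt x \<le> 2" using x by (simp add: divide_le_eq)
    then have "A * (ln x / sqrt x) \<le> A * 2" using A by (intro mult_left_mono) auto
    then show "A * (ln x / sqrt x) \<le> 2 * A" by (simp add: mult.commute)
  qed (use d A lx x in auto)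
  finally show ?thesis .
qed
lemma powr_le_aux:
  fixes z p q :: real
  assumes "0 \<le> q" "q \<le> p"
  shows "\<bar>z\<bar> powr q \<le> 1 + \<bar>z\<bar> powr p"
proof (cases "\<bar>z\<bar> \<le> 1")
  case True
  then have "\<bar>z\<bar> powr q \<le> 1" using assms by (intro powr_le1) auto
  then show ?thesis by (smt (verit) powr_ge_zero)
next
  case False
  then have "\<bar>z\<bar> powr q \<le> \<bar>z\<bar> powr p" using assms by (intro powr_mono) auto
  then show ?thesis by simp
qed

lemma moments:
  fixes M :: "real measure" and \<mu> \<delta> :: real
  assumes P: "prob_space M" and sM: "sets M = sets borel" and d: "\<delta> > 0"
    and mom: "integrable M (\<lambda>x. \<bar>x\<bar> powr (2 + \<delta>))"
  shows "integrable M (\<lambda>v. \<bar>v - \<mu>\<bar> powr (2 + \<delta>))" and "integrable M (\<lambda>v. (v - \<mu>)\<^sup>2)"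
    and "integrable M (\<lambda>v. v - \<mu>)" and "integrable M (\<lambda>v. v)"
proof -
  interpret prob_space M by (rule P)
  have bm: "f \<in> borel_measurable M" if "f \<in> borel_measurable borel" for f :: "real \<Rightarrow> real"
    using that sM by (simp cong: measurable_cong_sets)
  define p where "p = 2 + \<delta>"
  have p: "p \<ge> 2" using d by (simp add: p_def)
  show i3: "integrable M (\<lambda>v. \<bar>v - \<mu>\<bar> powr (2 + \<delta>))"
  proof (rule Bochner_Integration.integrable_bound[of _ "\<lambda>v. 2 powr p * (\<bar>v\<bar> powr p + \<bar>\<mu>\<bar> powr p)"])
    show "integrable M (\<lambda>v. 2 powr p * (\<bar>v\<bar> powr p + \<bar>\<mu>\<bar> powr p))"
      using mom by (simp add: p_def)
    show "(\<lambda>v. \<bar>v - \<mu>\<bar> powr (2 + \<delta>)) \<in> borel_measurable M" by (intro bm) measurable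
    show "AE v in M. norm (\<bar>v - \<mu>\<bar> powr (2 + \<delta>)) \<le> norm (2 powr p * (\<bar>v\<bar> powr p + \<bar>\<mu>\<bar> powr p))"
    proof (intro AE_I2)
      fix v
      have "\<bar>v - \<mu>\<bar> \<le> 2 * max \<bar>v\<bar> \<bar>\<mu>\<bar>" by simp
      then have "\<bar>v - \<mu>\<bar> powr p \<le> (2 * max \<bar>v\<bar> \<bar>\<mu>\<bar>) powr p" using p by (intro powr_mono2) auto
      also have "\<dots> = 2 powr p * max \<bar>v\<bar> \<bar>\<mu>\<bar> powr p" by (simp add: powr_mult)
      also have "max \<bar>v\<bar> \<bar>\<mu>\<bar> powr p \<le> \<bar>v\<bar> powr p + \<bar>\<mu>\<bar> powr p" by (simp add: max_def)
      finally have "\<bar>v - \<mu>\<bar> powr p \<le> 2 powr p * (\<bar>v\<bar> powr p + \<bar>\<mu>\<bar> powr p)" by simp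
      then show "norm (\<bar>v - \<mu>\<bar> powr (2 + \<delta>)) \<le> norm (2 powr p * (\<bar>v\<bar> powr p + \<bar>\<mu>\<bar> powr p))"
        by (simp add: p_def)
    qed
  qed
  show i2: "integrable M (\<lambda>v. (v - \<mu>)\<^sup>2)"
  proof (rule Bochner_Integration.integrable_bound[of _ "\<lambda>v. 1 + \<bar>v - \<mu>\<bar> powr (2 + \<delta>)"])
    show "integrable M (\<lambda>v. 1 + \<bar>v - \<mu>\<bar> powr (2 + \<delta>))" using i3 by simp
    show "(\<lambda>v. (v - \<mu>)\<^sup>2) \<in> borel_measurable M" by (intro bm) measurable
    show "AE v in M. norm ((v - \<mu>)\<^sup>2) \<le> norm (1 + \<bar>v - \<mu>\<bar> powr (2 + \<delta>))"
    proof (intro AE_I2)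
      fix v
      have "(v - \<mu>)\<^sup>2 = \<bar>v - \<mu>\<bar> powr 2"
      proof (cases "v = \<mu>")
        case False
        then have "\<bar>v - \<mu>\<bar> powr real 2 = \<bar>v - \<mu>\<bar> ^ 2" by (intro powr_realpow) simp
        then show ?thesis by simp
      qed simp
      also have "\<dots> \<le> 1 + \<bar>v - \<mu>\<bar> powr (2 + \<delta>)" using d by (intro powr_le_aux) auto
      finally show "norm ((v - \<mu>)\<^sup>2) \<le> norm (1 + \<bar>v - \<mu>\<bar> powr (2 + \<delta>))" by simp
    qed
  qed
  show i1: "integrable M (\<lambda>v. v - \<mu>)"
  proof (rule Bochner_Integration.integrable_bound[of _ "\<lambda>v. 1 + \<bar>v - \<mu>\<bar> powr (2 + \<delta>)"])
    show "integrable M (\<lambda>v. 1 + \<bar>v - \<mu>\<bar> powr (2 + \<delta>))" using i3 by simp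
    show "(\<lambda>v. v - \<mu>) \<in> borel_measurable M" by (intro bm) measurable
    show "AE v in M. norm (v - \<mu>) \<le> norm (1 + \<bar>v - \<mu>\<bar> powr (2 + \<delta>))"
    proof (intro AE_I2)
      fix v
      have "\<bar>v - \<mu>\<bar> = \<bar>v - \<mu>\<bar> powr 1" by (cases "v = \<mu>") simp_all
      also have "\<dots> \<le> 1 + \<bar>v - \<mu>\<bar> powr (2 + \<delta>)" using d by (intro powr_le_aux) auto
      finally show "norm (v - \<mu>) \<le> norm (1 + \<bar>v - \<mu>\<bar> powr (2 + \<delta>))" by simp
    qed
  qed
  have "integrable M (\<lambda>v. (v - \<mu>) + \<mu>)" using i1 by (intro Bochner_Integration.integrable_add) auto
  then show "integrable M (\<lambda>v. v)" by simp
qed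

lemma Fmu_pos:
  fixes M :: "real measure" and \<mu> :: real
  assumes P: "prob_space M" and sM: "sets M = sets borel"
    and i1: "integrable M (\<lambda>v. v - \<mu>)" and m0: "integral\<^sup>L M (\<lambda>v. v - \<mu>) = 0"
  shows "cdf_of M \<mu> > 0"
proof (rule ccontr)
  interpret prob_space M by (rule P)
  assume "\<not> cdf_of M \<mu> > 0"
  then have z: "measure M {..\<mu>} = 0" by (simp add: cdf_of_def measure_nonneg leD antisym)
  have "AE v in M. v \<notin> {..\<mu>}"
    using z sM by (intro AE_not_in) (auto simp: emeasure_eq_measure)
  then have gt: "AE v in M. v > \<mu>" by auto
  then have "AE v in M. 0 \<le> v - \<mu>" by auto
  then have "AE v in M. v - \<mu> = 0"
    using integral_nonneg_eq_0_iff_AE[OF i1] m0 by simp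
  with gt have "AE v in M. False" by eventually_elim simp
  then show False by (simp add: AE_False)
qed

theorem theorem4:
  fixes M :: "real measure" and f :: "real \<Rightarrow> real" and L :: "real \<Rightarrow> real"
    and \<alpha> \<delta> \<mu> :: real and \<gamma> u :: "nat \<Rightarrow> real"
  assumes prob: "prob_space M"
    and dens_meas: "f \<in> borel_measurable borel"
    and dens_nonneg: "\<forall>x. f x \<ge> 0"
    and dens: "M = density lborel (\<lambda>x. ennreal (f x))"
    and mean: "\<mu> = integral\<^sup>L M (\<lambda>x. x)"
    and sv: "slowly_varying L"
    and alpha: "\<alpha> > 2"
    and tail: "\<forall>x>0. 1 - cdf_of M x = L x * x powr (- \<alpha>)"
    and delta: "\<delta> > 0"
    and moment: "integrable M (\<lambda>x. \<bar>x\<bar> powr (2 + \<delta>))"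
    and gamma: "filterlim (\<lambda>n. (\<gamma> n - real n * \<mu>) / sqrt (real n * ln (real n))) at_top sequentially"
    and u_bound: "\<exists>C. \<forall>\<^sub>F n in sequentially.
                    u n \<le> \<mu> + C * ((\<gamma> n - real n * \<mu>) / sqrt (ln (real n)))"
    and u_pos: "\<forall>\<^sub>F n in sequentially. cdf_of M (u n) > 0"
  shows "\<exists>e :: nat \<Rightarrow> real. e \<longlonglongrightarrow> 0 \<and>
           (\<forall>\<^sub>F n in sequentially.
              ptilde (truncated M (u n)) n (\<gamma> n) - ptilde M n (\<gamma> n)
                = - ptilde M n (\<gamma> n) * (1 + e n))"
proof -
  interpret prob_space M by (rule prob)
  have sM: "sets M = sets borel" using dens by simp
  note mom123 = moments(1,2,3)[OF prob sM delta moment, of \<mu>]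
  note mom4 = moments(4)[OF prob sM delta moment]
  note mom = mom123 mom4
  have mean0: "integral\<^sup>L M (\<lambda>v. v - \<mu>) = 0"
    using mom(4) mean by (simp add: Bochner_Integration.integral_diff prob_space)
  have Fm: "cdf_of M \<mu> > 0" by (rule Fmu_pos[OF prob sM mom(3) mean0])
  obtain c z0 where c: "c > 0" and z0: "z0 > 0"
    and cz: "\<And>z. z \<ge> z0 \<Longrightarrow> c * z powr (-(\<alpha>+1)) \<le> 1 - cdf_of M z"
    using potter_lower[OF prob sM sv _ tail] alpha by force
  obtain C where Cev: "\<forall>\<^sub>F n in sequentially. u n \<le> \<mu> + C * ((\<gamma> n - real n * \<mu>) / sqrt (ln (real n)))"
    using u_bound by blast
  define C' where "C' = max C 1"
  define x where "x n = \<gamma> n - real n * \<mu>" for n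
  define V2 where "V2 = integral\<^sup>L M (\<lambda>v. (v - \<mu>)\<^sup>2)"
  define K where "K = integral\<^sup>L M (\<lambda>v. \<bar>v - \<mu>\<bar> powr (2 + \<delta>))"
  define A where "A = \<alpha> + 4"
  define Gc where "Gc = exp 1 * V2 + K * (2 * A) powr \<delta>"
  define Fmu where "Fmu = cdf_of M \<mu>"
  define Q where "Q = A\<^sup>2 * Gc / (2 * Fmu)"
  define H where "H = 2 + \<bar>\<mu>\<bar> + sqrt (2 * V2 + 1) + 2 * Q"
  define Kc where "Kc = 2 * 2 powr (\<alpha> + 1) / c"
  have V20: "V2 \<ge> 0" by (simp add: V2_def)
  have K0: "K \<ge> 0" by (simp add: K_def)
  have A0: "A > 0" using alpha by (simp add: A_def)
  have Gc0: "Gc \<ge> 0" using V20 K0 by (simp add: Gc_def)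
  have Fmu0: "Fmu > 0" using Fm by (simp add: Fmu_def)
  have Q0: "Q \<ge> 0" using Gc0 Fmu0 by (simp add: Q_def)
  have sq0: "sqrt (2 * V2 + 1) \<ge> 0" using V20 by simp
  have H1: "H \<ge> 2" unfolding H_def using Q0 sq0 abs_ge_zero[of \<mu>] by linarith
  have H2: "H \<ge> 2 * Q" unfolding H_def using Q0 sq0 abs_ge_zero[of \<mu>] by linarith
  have C'1: "C' \<ge> 1" "C \<le> C'" by (auto simp: C'_def)
  have ev1: "\<forall>\<^sub>F n in sequentially. n \<ge> 3" by (rule eventually_ge_at_top)
  have ev2: "\<forall>\<^sub>F n in sequentially. x n \<ge> H * sqrt (real n * ln (real n))"
  proof -
    have "\<forall>\<^sub>F n in sequentially. (\<gamma> n - real n * \<mu>) / sqrt (real n * ln (real n)) \<ge> H"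
      using gamma by (simp add: filterlim_at_top)
    then show ?thesis using ev1
    proof eventually_elim
      case (elim n)
      have "ln (real n) \<ge> 1" using ln_ge_1 elim(2) .
      then have "sqrt (real n * ln (real n)) > 0" using elim(2) by simp
      then show ?case using elim(1) by (simp add: x_def pos_le_divide_eq)
    qed
  qed
  have lim3: "filterlim (\<lambda>n. sqrt (ln (real n))) at_top sequentially" by real_asymp
  have ev3: "\<forall>\<^sub>F n in sequentially. 2 * A * C' / \<delta> \<le> sqrt (ln (real n))"
    using lim3 by (simp add: filterlim_at_top)
  have lim4: "filterlim (\<lambda>n. sqrt (real n)) at_top sequentially" by real_asymp
  have ev4: "\<forall>\<^sub>F n in sequentially. max z0 1 \<le> sqrt (real n)"
    using lim4 unfolding filterlim_at_top by blast
  have key: "ptilde M n (\<gamma> n) > 0 \<and>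
      ptilde (truncated M (u n)) n (\<gamma> n) / ptilde M n (\<gamma> n) \<le> Kc * x n powr (-2) \<and> x n \<ge> sqrt (real n)"
    if n3: "n \<ge> 3" and xH: "x n \<ge> H * sqrt (real n * ln (real n))"
      and AC: "2 * A * C' / \<delta> \<le> sqrt (ln (real n))" and nz: "max z0 1 \<le> sqrt (real n)"
      and Fu: "cdf_of M (u n) > 0"
      and uC: "u n \<le> \<mu> + C * ((\<gamma> n - real n * \<mu>) / sqrt (ln (real n)))"
    for n
  proof -
    define X where "X = x n"
    have ln1: "ln (real n) \<ge> 1" using ln_ge_1 n3 .
    have np: "real n > 0" using n3 by simp
    have sq_ge: "sqrt (real n * ln (real n)) \<ge> sqrt (real n)"
      using ln1 np by (intro real_sqrt_le_mono) (simp add: mult_le_cancel_left1)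
    have sn1: "sqrt (real n) \<ge> 1" using n3 by simp
    have "H * sqrt (real n) \<le> H * sqrt (real n * ln (real n))" using sq_ge H1 by (intro mult_left_mono) auto
    then have XH: "X \<ge> H * sqrt (real n)" using xH by (simp add: X_def)
    have "1 * sqrt (real n) \<le> H * sqrt (real n)" using H1 by (intro mult_right_mono) auto
    then have Xsn: "X \<ge> sqrt (real n)" using XH by simp
    have "2 * 1 \<le> H * sqrt (real n)" using H1 sn1 by (intro mult_mono) auto
    then have X2: "X \<ge> 2" using XH by simp
    have Xz0: "X \<ge> z0" using Xsn nz by simp
    define t where "t = sqrt (2 * real n * V2 + 1)"
    have "0 \<le> 2 * real n * V2" using V20 by simp
    then have "0 < 2 * real n * V2 + 1" by linarith
    then have t0: "t > 0" unfolding t_def by (rule real_sqrt_gt_zero)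
    have hV: "real (n - 1) * integral\<^sup>L M (\<lambda>v. (v - \<mu>)\<^sup>2) \<le> t\<^sup>2 / 2"
    proof -
      have "t\<^sup>2 = 2 * real n * V2 + 1" using V20 np by (simp add: t_def)
      moreover have "real (n - 1) * V2 \<le> real n * V2" using V20 by (intro mult_right_mono) auto
      ultimately show ?thesis by (simp add: V2_def)
    qed
    have low: "ptilde M n (\<gamma> n) \<ge> (1 - cdf_of M (\<gamma> n - real (n - 1) * \<mu> + t)) / 2"
      by (rule ptilde_lower[OF prob sM mom(2) mean0 _ t0 hV]) (use n3 in simp)
    have aeq: "\<gamma> n - real (n - 1) * \<mu> + t = X + \<mu> + t"
      using n3 by (simp add: X_def x_def of_nat_diff algebra_simps)
    have tb: "t \<le> sqrt (2 * V2 + 1) * sqrt (real n)"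
    proof -
      have "2 * real n * V2 + 1 \<le> (2 * V2 + 1) * real n" using np n3 by (simp add: algebra_simps)
      then have "t \<le> sqrt ((2 * V2 + 1) * real n)" unfolding t_def by (rule real_sqrt_le_mono)
      then show ?thesis by (simp add: real_sqrt_mult)
    qed
    have "\<bar>\<mu>\<bar> * 1 \<le> \<bar>\<mu>\<bar> * sqrt (real n)" using sn1 by (intro mult_left_mono) auto
    then have mub: "\<mu> \<le> \<bar>\<mu>\<bar> * sqrt (real n)" by linarith
    have "\<mu> + t \<le> (\<bar>\<mu>\<bar> + sqrt (2 * V2 + 1)) * sqrt (real n)" using tb mub by (simp add: algebra_simps)
    also have "\<dots> \<le> H * sqrt (real n)" by (intro mult_right_mono) (auto simp: H_def Q0)
    finally have "X + \<mu> + t \<le> 2 * X" using XH by simp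
    then have "cdf_of M (X + \<mu> + t) \<le> cdf_of M (2 * X)" by (rule cdf_mono[OF prob sM])
    moreover have "c * (2 * X) powr (-(\<alpha>+1)) \<le> 1 - cdf_of M (2 * X)" using Xz0 z0 by (intro cz) simp
    ultimately have lowb: "ptilde M n (\<gamma> n) \<ge> c * (2 * X) powr (-(\<alpha>+1)) / 2"
      using low aeq by simp
    have lowpos: "c * (2 * X) powr (-(\<alpha>+1)) / 2 > 0" using c X2 by simp
    define s where "s = A * ln X / X"
    define D where "D = C' * X / sqrt (ln (real n))"
    have s0: "s > 0" using A0 X2 by (simp add: s_def)
    have uD: "u n - \<mu> \<le> D"
    proof -
      have "X / sqrt (ln (real n)) \<ge> 0" using X2 ln1 by simp
      then have "C * (X / sqrt (ln (real n))) \<le> C' * (X / sqrt (ln (real n)))"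
        using C'1 by (intro mult_right_mono) auto
      then show ?thesis using uC by (simp add: D_def X_def x_def)
    qed
    have mgf: "(\<integral>\<^sup>+ v. ennreal (exp (s * (v - \<mu>))) \<partial>truncated M (u n))
      \<le> ennreal (1 + s\<^sup>2 / (2 * cdf_of M \<mu>) * (exp 1 * V2 + K * s powr \<delta> * exp (s * D)))"
      unfolding V2_def K_def by (rule mgf_trunc[OF prob sM Fu Fm s0 delta uD mom(3) mean0 mom(2) mom(1)])
    have ACd: "A * C' / sqrt (ln (real n)) \<le> \<delta> / 2"
    proof -
      have sl: "sqrt (ln (real n)) > 0" using ln1 by simp
      have "2 * A * C' \<le> \<delta> * sqrt (ln (real n))" using AC delta by (simp add: divide_le_eq mult.commute)
      then have "A * C' * 2 \<le> \<delta> * sqrt (ln (real n))" by (simp add: algebra_simps)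
      then show ?thesis using sl by (simp add: divide_le_eq algebra_simps)
    qed
    have sdb: "s powr \<delta> * exp (s * D) \<le> (2 * A) powr \<delta>"
      unfolding s_def D_def using sdelta_bound[of X A C' \<delta> "ln (real n)"] X2 A0 C'1 delta ln1 ACd by simp
    have mle: "1 + s\<^sup>2 / (2 * cdf_of M \<mu>) * (exp 1 * V2 + K * s powr \<delta> * exp (s * D))
        \<le> 1 + s\<^sup>2 * Gc / (2 * Fmu)"
    proof -
      have "K * (s powr \<delta> * exp (s * D)) \<le> K * (2 * A) powr \<delta>" using sdb K0 by (intro mult_left_mono)
      then have "exp 1 * V2 + K * s powr \<delta> * exp (s * D) \<le> Gc" by (simp add: Gc_def mult.assoc)
      then have "s\<^sup>2 / (2 * Fmu) * (exp 1 * V2 + K * s powr \<delta> * exp (s * D)) \<le> s\<^sup>2 / (2 * Fmu) * Gc"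
        using Fmu0 by (intro mult_left_mono) auto
      then show ?thesis by (simp add: Fmu_def)
    qed
    have m'0: "1 + s\<^sup>2 * Gc / (2 * Fmu) \<ge> 0" using Gc0 Fmu0 by simp
    have mgf': "(\<integral>\<^sup>+ v. ennreal (exp (s * (v - \<mu>))) \<partial>truncated M (u n)) \<le> ennreal (1 + s\<^sup>2 * Gc / (2 * Fmu))"
      using mgf mle by (meson order_trans ennreal_leI)
    have up1: "ptilde (truncated M (u n)) n (\<gamma> n) \<le> exp (- s * (\<gamma> n - real n * \<mu>)) * (1 + s\<^sup>2 * Gc / (2 * Fmu)) ^ n"
      by (rule chernoff_trunc[OF prob sM Fu s0 m'0 mgf'])
    have QX: "Q * real n * ln X \<le> X\<^sup>2"
      using Qn_bound[OF n3 Q0 _ H2] H1 xH by (simp add: X_def)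
    have up2: "exp (- (A * ln X / X) * X) * (1 + (A * ln X / X)\<^sup>2 * Gc / (2 * Fmu)) ^ n \<le> X powr (1 - A)"
      by (rule upper_arith) (use X2 A0 Gc0 Fmu0 QX in \<open>auto simp: Q_def\<close>)
    have up: "ptilde (truncated M (u n)) n (\<gamma> n) \<le> X powr (1 - A)"
      using up1 up2 by (simp add: s_def X_def x_def)
    have pM: "ptilde M n (\<gamma> n) > 0" using lowb lowpos by linarith
    have pT0: "ptilde (truncated M (u n)) n (\<gamma> n) \<ge> 0" by (simp add: ptilde_def)
    have "ptilde (truncated M (u n)) n (\<gamma> n) / ptilde M n (\<gamma> n) \<le> X powr (1 - A) / ptilde M n (\<gamma> n)"
      using up pM by (intro divide_right_mono) auto
    also have "\<dots> \<le> X powr (1 - A) / (c * (2 * X) powr (-(\<alpha>+1)) / 2)"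
      using lowb lowpos by (intro divide_left_mono) auto
    also have "\<dots> = Kc * X powr (-2)"
    proof -
      have X0: "X > 0" using X2 by simp
      have e1: "(2 * X) powr (-(\<alpha>+1)) = 2 powr (-(\<alpha>+1)) * X powr (-(\<alpha>+1))" using X0 by (simp add: powr_mult)
      have e2: "X powr (1 - A) = X powr (-2) * X powr (-(\<alpha>+1))"
        using X0 by (simp add: powr_add[symmetric] A_def)
      have e3: "(2::real) powr (-(\<alpha>+1)) = 1 / 2 powr (\<alpha>+1)" using powr_minus[of "2::real" "\<alpha>+1"] by (simp add: inverse_eq_divide)
      show ?thesis unfolding e1 e2 e3 Kc_def using c X0 by (simp add: field_simps)
    qed
    finally show ?thesis using pM Xsn by (simp add: X_def)
  qed
  have evkey: "\<forall>\<^sub>F n in sequentially. ptilde M n (\<gamma> n) > 0 \<and>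
      ptilde (truncated M (u n)) n (\<gamma> n) / ptilde M n (\<gamma> n) \<le> Kc * x n powr (-2) \<and> x n \<ge> sqrt (real n)"
    using ev1 ev2 ev3 ev4 u_pos Cev by eventually_elim (rule key)
  define r where "r n = ptilde (truncated M (u n)) n (\<gamma> n) / ptilde M n (\<gamma> n)" for n
  have xlim: "filterlim x at_top sequentially"
    by (rule filterlim_at_top_mono[OF lim4]) (use evkey in \<open>auto elim: eventually_mono\<close>)
  have "(\<lambda>n. x n powr (-2)) \<longlonglongrightarrow> 0" by (rule tendsto_neg_powr[OF _ xlim]) simp
  then have ub: "(\<lambda>n. Kc * x n powr (-2)) \<longlonglongrightarrow> 0" by (rule tendsto_mult_right_zero)
  have r0: "r \<longlonglongrightarrow> 0"
  proof (rule tendsto_sandwich[OF _ _ tendsto_const ub])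
    show "\<forall>\<^sub>F n in sequentially. 0 \<le> r n" by (intro always_eventually allI) (simp add: r_def ptilde_def)
    show "\<forall>\<^sub>F n in sequentially. r n \<le> Kc * x n powr (-2)" using evkey by eventually_elim (simp add: r_def)
  qed
  show ?thesis
  proof (intro exI conjI)
    show "(\<lambda>n. - r n) \<longlonglongrightarrow> 0" using tendsto_minus[OF r0] by simp
    show "\<forall>\<^sub>F n in sequentially. ptilde (truncated M (u n)) n (\<gamma> n) - ptilde M n (\<gamma> n)
                = - ptilde M n (\<gamma> n) * (1 + - r n)"
      using evkey by eventually_elim (simp add: r_def field_simps)
  qed
qed

end
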